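(* Let $\mathcal A,\mathcal B>0$, $\alpha,\beta\in(0,1)$, $h,\tau>0$, $M\ge 2$. Then the $(M-1)\times(M-1)$ matrices $A-g_0^{(\alpha,\beta)}B$ and $\widetilde A-g_0^{(\alpha,\beta)}\widetilde B$ (defined in the context) are nonsingular; consequently the time-stepping linear systems $$\big(A-g_0^{(\alpha,\beta)}B\big)\mathbf U^{k+1}=\big(A+g_1^{(\alpha,\beta)}B\big)\mathbf U^{k}+\sum_{\ell=2}^{k+1}g_\ell^{(\alpha,\beta)}B\,\mathbf U^{k+1-\ell}+\tau A\mathbf F^k+C_k$$ and $$\big(\widetilde A-g_0^{(\alpha,\beta)}\widetilde B\big)\mathbf U^{k+1}=\big(\widetilde A+g_1^{(\alpha,\beta)}\widetilde B\big)\mathbf U^{k}+\sum_{\ell=2}^{k+1}g_\ell^{(\alpha,\beta)}\widetilde B\,\mathbf U^{k+1-\ell}+\tau A\mathbf F^k+\widetilde C_k$$ are uniquely solvable for $\mathbf U^{k+1}$, for any given vectors $\mathbf U^0,\dots,\mathbf U^k,\mathbf F^k,C_k,\widetilde C_k\in\mathbb R^{M-1}$.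
   Context: $\varpi_\ell^{(\gamma)}=(-1)^\ell\binom{\gamma}{\ell}$, $g_0^{(\gamma)}=\frac{1+\gamma}{2}\varpi_0^{(\gamma)}$, $g_\ell^{(\gamma)}=\frac{1+\gamma}{2}\varpi_\ell^{(\gamma)}+\frac{1-\gamma}{2}\varpi_{\ell-1}^{(\gamma)}$ ($\ell\ge1$); $\mu_\alpha=\tau^\alpha\mathcal A/h^2$, $\mu_\beta=\tau^\beta\mathcal B/h^2$, $g_\ell^{(\alpha,\beta)}=\mu_\alpha g_\ell^{(1-\alpha)}+\mu_\beta g_\ell^{(1-\beta)}$. $A$ is the symmetric banded Toeplitz matrix of size $M-1$ with diagonal $\frac{14}{15}$, first off-diagonals $\frac{2}{45}$, second off-diagonals $-\frac1{90}$, zero elsewhere; $B$ is the symmetric banded Toeplitz matrix with diagonal $-\frac52$, first off-diagonals $\frac43$, second off-diagonals $-\frac1{12}$. $\widetilde A$ is the symmetric banded Toeplitz matrix with diagonal $\frac{27}{28}$, off-diagonals $\frac{3}{112}$, $-\frac{3}{280}$, $\frac1{560}$ (at distances $1,2,3$); $\widetilde B$ is the symmetric banded Toeplitz matrix with diagonal $-\frac{49}{18}$, off-diagonals $\frac32$, $-\frac{3}{20}$, $\frac1{90}$ (at distances $1,2,3$). These are the matrix forms of the sixth-order and eighth-order compact schemes for $u_t=(\mathcal A\,{}_{RL}D_{0,t}^{1-\alpha}+\mathcal B\,{}_{RL}D_{0,t}^{1-\beta})u_{xx}+f$, with $C_k,\widetilde C_k$ collecting boundary and ghost-point contributions. *)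

theory Defs
  imports Complex_Main "Jordan_Normal_Form.Determinant"
begin

definition varpi :: "real \<Rightarrow> nat \<Rightarrow> real" where
  "varpi \<gamma> l = (-1) ^ l * (\<gamma> gchoose l)"

definition gw :: "real \<Rightarrow> nat \<Rightarrow> real" where
  "gw \<gamma> l = (if l = 0 then (1 + \<gamma>) / 2 * varpi \<gamma> 0
              else (1 + \<gamma>) / 2 * varpi \<gamma> l + (1 - \<gamma>) / 2 * varpi \<gamma> (l - 1))"

definition gab :: "real \<Rightarrow> real \<Rightarrow> real \<Rightarrow> real \<Rightarrow> real \<Rightarrow> real \<Rightarrow> nat \<Rightarrow> real" where
  "gab cA cB \<alpha> \<beta> \<tau> h l =
     (\<tau> powr \<alpha> * cA / h ^ 2) * gw (1 - \<alpha>) l + (\<tau> powr \<beta> * cB / h ^ 2) * gw (1 - \<beta>) l"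

definition sym_toeplitz :: "nat \<Rightarrow> (nat \<Rightarrow> real) \<Rightarrow> real mat" where
  "sym_toeplitz n c = mat n n (\<lambda>(i, j). c (if i \<le> j then j - i else i - j))"

definition matA :: "nat \<Rightarrow> real mat" where
  "matA n = sym_toeplitz n (\<lambda>d. if d = 0 then 14/15 else if d = 1 then 2/45
                                 else if d = 2 then -1/90 else 0)"

definition matB :: "nat \<Rightarrow> real mat" where
  "matB n = sym_toeplitz n (\<lambda>d. if d = 0 then -5/2 else if d = 1 then 4/3
                                 else if d = 2 then -1/12 else 0)"

definition matAt :: "nat \<Rightarrow> real mat" where
  "matAt n = sym_toeplitz n (\<lambda>d. if d = 0 then 27/28 else if d = 1 then 3/112
                                 else if d = 2 then -3/280 else if d = 3 then 1/560 else 0)"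

definition matBt :: "nat \<Rightarrow> real mat" where
  "matBt n = sym_toeplitz n (\<lambda>d. if d = 0 then -49/18 else if d = 1 then 3/2
                                 else if d = 2 then -3/20 else if d = 3 then 1/90 else 0)"

end

theory Submission
  imports Defs
begin

definition zext :: "nat \<Rightarrow> real vec \<Rightarrow> int \<Rightarrow> real" where
  "zext n x i = (if 0 \<le> i \<and> i < int n then x $ nat i else 0)"

lemma zext_out: "i < 0 \<or> i \<ge> int n \<Longrightarrow> zext n x i = 0"
  by (auto simp: zext_def)

lemma shift_sum:
  fixes F :: "int \<Rightarrow> real"
  assumes F0: "\<And>i. i < -5 \<or> i \<ge> N + 5 \<Longrightarrow> F i = 0" and s: "\<bar>s\<bar> \<le> 5"
  shows "(\<Sum>i\<in>{-10..<N+10}. F (i+s)) = (\<Sum>i\<in>{-10..<N+10}. F i)"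
proof -
  have img: "(\<lambda>i. i+s) ` {-10..<N+10} = {-10+s..<N+10+s}"
  proof
    show "{-10 + s..<N + 10 + s} \<subseteq> (\<lambda>i. i + s) ` {-10..<N + 10}"
    proof
      fix y assume "y \<in> {-10 + s..<N + 10 + s}"
      then have "y - s \<in> {-10..<N + 10}" by auto
      then show "y \<in> (\<lambda>i. i + s) ` {-10..<N + 10}" by (rule rev_image_eqI) simp
    qed
  qed auto
  have "(\<Sum>i\<in>{-10..<N+10}. F (i+s)) = (\<Sum>i\<in>(\<lambda>i. i+s) ` {-10..<N+10}. F i)"
    by (subst sum.reindex) (auto simp: inj_on_def)
  also have "\<dots> = (\<Sum>i\<in>{-5..<N+5}. F i)"
    unfolding img using s by (intro sum.mono_neutral_right) (auto intro: F0)
  also have "\<dots> = (\<Sum>i\<in>{-10..<N+10}. F i)"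
    by (intro sum.mono_neutral_left) (auto intro: F0)
  finally show ?thesis .
qed

lemma stencil:
  assumes x: "x \<in> carrier_vec n" and i: "i < n" and c: "\<forall>d>3. c d = 0"
  shows "(sym_toeplitz n c *\<^sub>v x) $ i = c 0 * zext n x (int i)
     + c 1 * (zext n x (int i + 1) + zext n x (int i - 1))
     + c 2 * (zext n x (int i + 2) + zext n x (int i - 2))
     + c 3 * (zext n x (int i + 3) + zext n x (int i - 3))"
proof -
  let ?z = "zext n x"
  let ?g = "\<lambda>j::int. c (nat \<bar>int i - j\<bar>) * ?z j"
  have "(sym_toeplitz n c *\<^sub>v x) $ i = (\<Sum>j<n. c (if i \<le> j then j - i else i - j) * x $ j)"
    using x i by (simp add: sym_toeplitz_def mult_mat_vec_def scalar_prod_def row_def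
        lessThan_atLeast0 mult.commute)
  also have "\<dots> = (\<Sum>j<n. ?g (int j))"
    by (intro sum.cong refl) (auto simp: zext_def nat_diff_distrib)
  also have "\<dots> = (\<Sum>j\<in>int ` {..<n}. ?g j)"
    by (subst sum.reindex) auto
  also have "int ` {..<n} = {0..<int n}"
    by (auto simp: image_iff intro!: bexI[where x="nat _"])
  also have "(\<Sum>j\<in>{0..<int n}. ?g j) = (\<Sum>j\<in>{0..<int n} \<union> {int i - 3..int i + 3}. ?g j)"
    by (intro sum.mono_neutral_left) (auto simp: zext_def)
  also have "\<dots> = (\<Sum>j\<in>{int i - 3..int i + 3}. ?g j)"
    using c by (intro sum.mono_neutral_right) auto
  also have "{int i - 3..int i + 3} = {int i - 3, int i - 2, int i - 1, int i, int i + 1, int i + 2, int i + 3}"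
    by auto
  also have "(\<Sum>j\<in>\<dots>. ?g j) = c 0 * ?z (int i)
     + c 1 * (?z (int i + 1) + ?z (int i - 1))
     + c 2 * (?z (int i + 2) + ?z (int i - 2))
     + c 3 * (?z (int i + 3) + ?z (int i - 3))"
    by (simp add: algebra_simps)
  finally show ?thesis .
qed


lemma main_inj:
  fixes c :: "nat \<Rightarrow> real"
  assumes x: "x \<in> carrier_vec n" and T0: "sym_toeplitz n c *\<^sub>v x = 0\<^sub>v n"
    and c: "\<forall>d>3. c d = 0"
    and arith: "\<And>P0 P1 P2 P3::real. 2*P0 - 2*P1 \<ge> 0 \<Longrightarrow> 6*P0 - 8*P1 + 2*P2 \<ge> 0
       \<Longrightarrow> 20*P0 - 30*P1 + 12*P2 - 2*P3 \<ge> 0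
       \<Longrightarrow> 2*P0 + 2*P1 \<ge> 0 \<Longrightarrow> 2*P0 - 2*P1 \<ge> 0
       \<Longrightarrow> 2*P0 + 2*P2 \<ge> 0 \<Longrightarrow> 2*P0 - 2*P2 \<ge> 0
       \<Longrightarrow> 2*P0 + 2*P3 \<ge> 0 \<Longrightarrow> 2*P0 - 2*P3 \<ge> 0
       \<Longrightarrow> c 0 * P0 + 2 * c 1 * P1 + 2 * c 2 * P2 + 2 * c 3 * P3 = 0 \<Longrightarrow> P0 \<le> 0"
  shows "x = 0\<^sub>v n"
proof -
  define z where "z = zext n x"
  define R where "R = {-10..<int n+10}"
  define P where "P e = (\<Sum>i\<in>R. z i * z (i + e))" for e
  have zout: "z i = 0" if "i < 0 \<or> i \<ge> int n" for i
    using that unfolding z_def by (rule zext_out)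
  have key: "(\<Sum>i\<in>R. z (i+a) * z (i+b)) = P (b - a)" if "\<bar>a\<bar> \<le> 4" "\<bar>b\<bar> \<le> 4" for a b
  proof -
    have "(\<Sum>i\<in>R. (\<lambda>i. z i * z (i + (b - a))) (i+a)) = (\<Sum>i\<in>R. (\<lambda>i. z i * z (i + (b - a))) i)"
      unfolding R_def using that by (intro shift_sum) (auto simp: zout)
    then show ?thesis by (simp add: P_def)
  qed
  have k01: "(\<Sum>i\<in>R. z i * z (i+1)) = P 1" by (simp add: P_def)
  have k02: "(\<Sum>i\<in>R. z i * z (i+2)) = P 2" by (simp add: P_def)
  have k03: "(\<Sum>i\<in>R. z i * z (i+3)) = P 3" by (simp add: P_def)
  have k00: "(\<Sum>i\<in>R. z i * z i) = P 0" by (simp add: P_def)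
  have k11: "(\<Sum>i\<in>R. z (i+1) * z (i+1)) = P 0" using key[of 1 1] by simp
  have k22: "(\<Sum>i\<in>R. z (i+2) * z (i+2)) = P 0" using key[of 2 2] by simp
  have k33: "(\<Sum>i\<in>R. z (i+3) * z (i+3)) = P 0" using key[of 3 3] by simp
  have k12: "(\<Sum>i\<in>R. z (i+1) * z (i+2)) = P 1" using key[of 1 2] by simp
  have k13: "(\<Sum>i\<in>R. z (i+1) * z (i+3)) = P 2" using key[of 1 3] by simp
  have k23: "(\<Sum>i\<in>R. z (i+2) * z (i+3)) = P 1" using key[of 2 3] by simp
  have km1: "(\<Sum>i\<in>R. z i * z (i - 1)) = P 1" using key[of "-1" 0] by (simp add: mult.commute)
  have km2: "(\<Sum>i\<in>R. z i * z (i - 2)) = P 2" using key[of "-2" 0] by (simp add: mult.commute)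
  have km3: "(\<Sum>i\<in>R. z i * z (i - 3)) = P 3" using key[of "-3" 0] by (simp add: mult.commute)
  have finR: "finite R" by (simp add: R_def)
  have "0 = (\<Sum>i<n. x $ i * (sym_toeplitz n c *\<^sub>v x) $ i)" using T0 by simp
  also have "\<dots> = (\<Sum>i<n. (\<lambda>j. z j * (c 0 * z j + c 1 * (z (j + 1) + z (j - 1))
     + c 2 * (z (j + 2) + z (j - 2)) + c 3 * (z (j + 3) + z (j - 3)))) (int i))"
    using x c by (intro sum.cong refl) (simp add: stencil z_def zext_def)
  also have "\<dots> = (\<Sum>j\<in>int ` {..<n}. z j * (c 0 * z j + c 1 * (z (j + 1) + z (j - 1))
     + c 2 * (z (j + 2) + z (j - 2)) + c 3 * (z (j + 3) + z (j - 3))))"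
    by (subst sum.reindex) auto
  also have "int ` {..<n} = {0..<int n}"
    by (auto simp: image_iff intro!: bexI[where x="nat _"])
  also have "(\<Sum>j\<in>{0..<int n}. z j * (c 0 * z j + c 1 * (z (j + 1) + z (j - 1))
     + c 2 * (z (j + 2) + z (j - 2)) + c 3 * (z (j + 3) + z (j - 3))))
     = (\<Sum>j\<in>R. z j * (c 0 * z j + c 1 * (z (j + 1) + z (j - 1))
     + c 2 * (z (j + 2) + z (j - 2)) + c 3 * (z (j + 3) + z (j - 3))))"
    unfolding R_def by (intro sum.mono_neutral_left) (auto simp: zout)
  also have "\<dots> = (\<Sum>j\<in>R. c 0 * (z j * z j) + c 1 * (z j * z (j + 1)) + c 1 * (z j * z (j - 1))
     + c 2 * (z j * z (j + 2)) + c 2 * (z j * z (j - 2))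
     + c 3 * (z j * z (j + 3)) + c 3 * (z j * z (j - 3)))"
    by (intro sum.cong refl) (simp add: algebra_simps)
  also have "\<dots> = c 0 * (\<Sum>j\<in>R. z j * z j) + c 1 * (\<Sum>j\<in>R. z j * z (j + 1))
     + c 1 * (\<Sum>j\<in>R. z j * z (j - 1))
     + c 2 * (\<Sum>j\<in>R. z j * z (j + 2)) + c 2 * (\<Sum>j\<in>R. z j * z (j - 2))
     + c 3 * (\<Sum>j\<in>R. z j * z (j + 3)) + c 3 * (\<Sum>j\<in>R. z j * z (j - 3))"
    by (simp add: sum.distrib sum_distrib_left)
  also have "\<dots> = c 0 * P 0 + 2 * c 1 * P 1 + 2 * c 2 * P 2 + 2 * c 3 * P 3"
    unfolding k00 k01 k02 k03 km1 km2 km3 by simp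
  finally have Q: "c 0 * P 0 + 2 * c 1 * P 1 + 2 * c 2 * P 2 + 2 * c 3 * P 3 = 0" by simp
  have D1: "2 * P 0 - 2 * P 1 \<ge> 0"
  proof -
    have "0 \<le> (\<Sum>i\<in>R. (z (i+1) - z i)^2)" by (intro sum_nonneg) simp
    also have "\<dots> = (\<Sum>i\<in>R. z (i+1) * z (i+1)) - 2 * (\<Sum>i\<in>R. z i * z (i+1)) + (\<Sum>i\<in>R. z i * z i)"
      by (simp add: power2_eq_square sum.distrib sum_subtractf sum_distrib_left algebra_simps)
    finally show ?thesis unfolding k00 k01 k11 by simp
  qed
  have E: "2 * P 0 + 2 * s * P e \<ge> 0" if "e \<in> {1,2,3}" "s \<in> {-1,1}" for e s
  proof -
    have "0 \<le> (\<Sum>i\<in>R. (z (i+e) + s * z i)^2)" by (intro sum_nonneg) simp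
    also have "\<dots> = (\<Sum>i\<in>R. z (i+e) * z (i+e)) + 2 * s * (\<Sum>i\<in>R. z i * z (i+e)) + s * s * (\<Sum>i\<in>R. z i * z i)"
      by (simp add: power2_eq_square sum.distrib sum_subtractf sum_distrib_left algebra_simps)
    also have "(\<Sum>i\<in>R. z (i+e) * z (i+e)) = P 0" using key[of e e] that by auto
    finally show ?thesis using that unfolding k00 P_def[symmetric] by auto
  qed
  have D2: "6 * P 0 - 8 * P 1 + 2 * P 2 \<ge> 0"
  proof -
    have "0 \<le> (\<Sum>i\<in>R. (z (i+2) - 2 * z (i+1) + z i)^2)" by (intro sum_nonneg) simp
    also have "\<dots> = (\<Sum>i\<in>R. z (i+2) * z (i+2)) + 4 * (\<Sum>i\<in>R. z (i+1) * z (i+1))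
       + (\<Sum>i\<in>R. z i * z i) - 4 * (\<Sum>i\<in>R. z (i+1) * z (i+2)) + 2 * (\<Sum>i\<in>R. z i * z (i+2))
       - 4 * (\<Sum>i\<in>R. z i * z (i+1))"
      by (simp add: power2_eq_square sum.distrib sum_subtractf sum_distrib_left algebra_simps)
    finally show ?thesis unfolding k00 k01 k11 k22 k12 k02 by simp
  qed
  have D3: "20 * P 0 - 30 * P 1 + 12 * P 2 - 2 * P 3 \<ge> 0"
  proof -
    have "0 \<le> (\<Sum>i\<in>R. (z (i+3) - 3 * z (i+2) + 3 * z (i+1) - z i)^2)" by (intro sum_nonneg) simp
    also have "\<dots> = (\<Sum>i\<in>R. z (i+3) * z (i+3)) + 9 * (\<Sum>i\<in>R. z (i+2) * z (i+2))
       + 9 * (\<Sum>i\<in>R. z (i+1) * z (i+1)) + (\<Sum>i\<in>R. z i * z i)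
       - 6 * (\<Sum>i\<in>R. z (i+2) * z (i+3)) + 6 * (\<Sum>i\<in>R. z (i+1) * z (i+3))
       - 2 * (\<Sum>i\<in>R. z i * z (i+3)) - 18 * (\<Sum>i\<in>R. z (i+1) * z (i+2))
       + 6 * (\<Sum>i\<in>R. z i * z (i+2)) - 6 * (\<Sum>i\<in>R. z i * z (i+1))"
      by (simp add: power2_eq_square sum.distrib sum_subtractf sum_distrib_left algebra_simps)
    finally show ?thesis unfolding k00 k01 k11 k22 k12 k02 k33 k13 k23 k03 by simp
  qed
  have e1: "2*P 0 + 2*P 1 \<ge> 0" "2*P 0 - 2*P 1 \<ge> 0" "2*P 0 + 2*P 2 \<ge> 0"
    "2*P 0 - 2*P 2 \<ge> 0" "2*P 0 + 2*P 3 \<ge> 0" "2*P 0 - 2*P 3 \<ge> 0"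
    using E[of 1 1] E[of 1 "-1"] E[of 2 1] E[of 2 "-1"] E[of 3 1] E[of 3 "-1"] by auto
  have "P 0 \<le> 0"
    by (rule arith[OF D1 D2 D3 e1 Q])
  moreover have "P 0 \<ge> 0" unfolding P_def by (intro sum_nonneg) simp
  ultimately have "(\<Sum>i\<in>R. z i * z i) = 0" unfolding P_def by simp
  then have zz: "\<forall>i\<in>R. z i * z i = 0" using finR by (subst (asm) sum_nonneg_eq_0_iff) auto
  show ?thesis
  proof (rule eq_vecI)
    fix i assume "i < dim_vec (0\<^sub>v n :: real vec)"
    then have i: "i < n" by simp
    then have "int i \<in> R" by (simp add: R_def)
    with zz have "z (int i) = 0" by simp
    then show "x $ i = 0\<^sub>v n $ i" using i by (simp add: z_def zext_def)
  qed (use x in simp)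
qed


lemma toep_carrier[simp]: "sym_toeplitz n c \<in> carrier_mat n n"
  by (simp add: sym_toeplitz_def)

lemma toep_comb: "sym_toeplitz n a - g \<cdot>\<^sub>m sym_toeplitz n b = sym_toeplitz n (\<lambda>d. a d - g * b d)"
  by (rule eq_matI) (auto simp: sym_toeplitz_def)

lemma toep_det:
  assumes c: "\<forall>d>3. c d = 0"
    and arith: "\<And>P0 P1 P2 P3::real. 2*P0 - 2*P1 \<ge> 0 \<Longrightarrow> 6*P0 - 8*P1 + 2*P2 \<ge> 0
       \<Longrightarrow> 20*P0 - 30*P1 + 12*P2 - 2*P3 \<ge> 0
       \<Longrightarrow> 2*P0 + 2*P1 \<ge> 0 \<Longrightarrow> 2*P0 - 2*P1 \<ge> 0
       \<Longrightarrow> 2*P0 + 2*P2 \<ge> 0 \<Longrightarrow> 2*P0 - 2*P2 \<ge> 0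
       \<Longrightarrow> 2*P0 + 2*P3 \<ge> 0 \<Longrightarrow> 2*P0 - 2*P3 \<ge> 0
       \<Longrightarrow> c 0 * P0 + 2 * c 1 * P1 + 2 * c 2 * P2 + 2 * c 3 * P3 = 0 \<Longrightarrow> P0 \<le> 0"
  shows "det (sym_toeplitz n c) \<noteq> 0"
proof
  assume "det (sym_toeplitz n c) = 0"
  then obtain v where v: "v \<in> carrier_vec n" "v \<noteq> 0\<^sub>v n" "sym_toeplitz n c *\<^sub>v v = 0\<^sub>v n"
    using det_0_iff_vec_prod_zero[OF toep_carrier] by blast
  have "v = 0\<^sub>v n" by (rule main_inj[OF v(1) v(3) c arith])
  with v(2) show False by simp
qed

lemma unique_solve:
  fixes A :: "real mat"
  assumes A: "A \<in> carrier_mat n n" and d: "det A \<noteq> 0" and r: "r \<in> carrier_vec n"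
  shows "\<exists>!X. X \<in> carrier_vec n \<and> A *\<^sub>v X = r"
proof -
  have "A \<in> Units (ring_mat TYPE(real) n ())" by (rule det_non_zero_imp_unit[OF A d])
  then obtain B where B: "B \<in> carrier_mat n n" and AB: "A * B = 1\<^sub>m n" and BA: "B * A = 1\<^sub>m n"
    unfolding Units_def ring_mat_def by auto
  show ?thesis
  proof (rule ex1I[of _ "B *\<^sub>v r"])
    have "A *\<^sub>v (B *\<^sub>v r) = (A * B) *\<^sub>v r" using A B r by (simp add: assoc_mult_mat_vec)
    then show "B *\<^sub>v r \<in> carrier_vec n \<and> A *\<^sub>v (B *\<^sub>v r) = r" using AB B r by simp
  next
    fix X assume X: "X \<in> carrier_vec n \<and> A *\<^sub>v X = r"
    have "B *\<^sub>v (A *\<^sub>v X) = (B * A) *\<^sub>v X" using A B X by (simp add: assoc_mult_mat_vec)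
    with X BA show "X = B *\<^sub>v r" by simp
  qed
qed

lemma arith1:
  fixes g :: real assumes g: "g \<ge> 0"
  shows "\<And>P0 P1 P2 P3::real. 2*P0 - 2*P1 \<ge> 0 \<Longrightarrow> 6*P0 - 8*P1 + 2*P2 \<ge> 0
       \<Longrightarrow> 20*P0 - 30*P1 + 12*P2 - 2*P3 \<ge> 0
       \<Longrightarrow> 2*P0 + 2*P1 \<ge> 0 \<Longrightarrow> 2*P0 - 2*P1 \<ge> 0
       \<Longrightarrow> 2*P0 + 2*P2 \<ge> 0 \<Longrightarrow> 2*P0 - 2*P2 \<ge> 0
       \<Longrightarrow> 2*P0 + 2*P3 \<ge> 0 \<Longrightarrow> 2*P0 - 2*P3 \<ge> 0
       \<Longrightarrow> (14/15 - g * (-5/2)) * P0 + 2 * (2/45 - g * (4/3)) * P1 + 2 * (-1/90 - g * (-1/12)) * P2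
           + 2 * (0 - g * 0) * P3 = 0 \<Longrightarrow> P0 \<le> 0"
proof -
  fix P0 P1 P2 P3 :: real
  assume h: "2*P0 - 2*P1 \<ge> 0" "6*P0 - 8*P1 + 2*P2 \<ge> 0"
       "2*P0 + 2*P1 \<ge> 0" "2*P0 - 2*P2 \<ge> 0" "2*P0 + 2*P2 \<ge> 0"
    and q: "(14/15 - g * (-5/2)) * P0 + 2 * (2/45 - g * (4/3)) * P1 + 2 * (-1/90 - g * (-1/12)) * P2
           + 2 * (0 - g * 0) * P3 = 0"
  define S where "S = (2*P0 - 2*P1) + (6*P0 - 8*P1 + 2*P2) / 12"
  have gs: "g * S \<ge> 0" using g h by (simp add: S_def)
  have "(14/15 - g * (-5/2)) * P0 + 2 * (2/45 - g * (4/3)) * P1 + 2 * (-1/90 - g * (-1/12)) * P2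
           + 2 * (0 - g * 0) * P3 = (14/15 * P0 + 4/45 * P1 - 1/45 * P2) + g * S"
    unfolding S_def by (simp add: field_simps)
  then show "P0 \<le> 0" using h q gs by linarith
qed

lemma arith2:
  fixes g :: real assumes g: "g \<ge> 0"
  shows "\<And>P0 P1 P2 P3::real. 2*P0 - 2*P1 \<ge> 0 \<Longrightarrow> 6*P0 - 8*P1 + 2*P2 \<ge> 0
       \<Longrightarrow> 20*P0 - 30*P1 + 12*P2 - 2*P3 \<ge> 0
       \<Longrightarrow> 2*P0 + 2*P1 \<ge> 0 \<Longrightarrow> 2*P0 - 2*P1 \<ge> 0
       \<Longrightarrow> 2*P0 + 2*P2 \<ge> 0 \<Longrightarrow> 2*P0 - 2*P2 \<ge> 0
       \<Longrightarrow> 2*P0 + 2*P3 \<ge> 0 \<Longrightarrow> 2*P0 - 2*P3 \<ge> 0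
       \<Longrightarrow> (27/28 - g * (-49/18)) * P0 + 2 * (3/112 - g * (3/2)) * P1 + 2 * (-3/280 - g * (-3/20)) * P2
           + 2 * (1/560 - g * (1/90)) * P3 = 0 \<Longrightarrow> P0 \<le> 0"
proof -
  fix P0 P1 P2 P3 :: real
  assume h: "2*P0 - 2*P1 \<ge> 0" "6*P0 - 8*P1 + 2*P2 \<ge> 0" "20*P0 - 30*P1 + 12*P2 - 2*P3 \<ge> 0"
       "2*P0 + 2*P1 \<ge> 0" "2*P0 - 2*P2 \<ge> 0" "2*P0 + 2*P2 \<ge> 0"
       "2*P0 + 2*P3 \<ge> 0" "2*P0 - 2*P3 \<ge> 0"
    and q: "(27/28 - g * (-49/18)) * P0 + 2 * (3/112 - g * (3/2)) * P1 + 2 * (-3/280 - g * (-3/20)) * P2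
           + 2 * (1/560 - g * (1/90)) * P3 = 0"
  define S where "S = (2*P0 - 2*P1) + (6*P0 - 8*P1 + 2*P2) / 12 + (20*P0 - 30*P1 + 12*P2 - 2*P3) / 90"
  have gs: "g * S \<ge> 0" using g h by (simp add: S_def)
  have "(27/28 - g * (-49/18)) * P0 + 2 * (3/112 - g * (3/2)) * P1 + 2 * (-3/280 - g * (-3/20)) * P2
           + 2 * (1/560 - g * (1/90)) * P3 = (27/28 * P0 + 3/56 * P1 - 3/140 * P2 + 1/280 * P3) + g * S"
    unfolding S_def by (simp add: field_simps)
  then show "P0 \<le> 0" using h q gs by linarith
qed

lemma add_carr_right: "C \<in> carrier_vec n \<Longrightarrow> (a::real vec) + C \<in> carrier_vec n"
  by (rule carrier_vecI) simp

theorem theorem1: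
  fixes cA cB \<alpha> \<beta> h \<tau> :: real and M :: nat
  assumes "cA > 0" and "cB > 0" and "0 < \<alpha>" and "\<alpha> < 1" and "0 < \<beta>" and "\<beta> < 1"
    and "h > 0" and "\<tau> > 0" and "M \<ge> 2"
  defines "g \<equiv> gab cA cB \<alpha> \<beta> \<tau> h"
  shows "det (matA (M - 1) - g 0 \<cdot>\<^sub>m matB (M - 1)) \<noteq> 0
       \<and> det (matAt (M - 1) - g 0 \<cdot>\<^sub>m matBt (M - 1)) \<noteq> 0
       \<and> (\<forall>(k::nat) (U::nat \<Rightarrow> real vec) F C Ct.
            (\<forall>j\<le>k. U j \<in> carrier_vec (M - 1)) \<longrightarrow> F \<in> carrier_vec (M - 1)
            \<longrightarrow> C \<in> carrier_vec (M - 1) \<longrightarrow> Ct \<in> carrier_vec (M - 1) \<longrightarrow>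
            (\<exists>!X. X \<in> carrier_vec (M - 1) \<and>
               (matA (M - 1) - g 0 \<cdot>\<^sub>m matB (M - 1)) *\<^sub>v X =
                 (matA (M - 1) + g 1 \<cdot>\<^sub>m matB (M - 1)) *\<^sub>v U k
                 + vec (M - 1) (\<lambda>i. \<Sum>l = 2..k + 1. (g l \<cdot>\<^sub>v (matB (M - 1) *\<^sub>v U (k + 1 - l))) $ i)
                 + \<tau> \<cdot>\<^sub>v (matA (M - 1) *\<^sub>v F) + C)
          \<and> (\<exists>!X. X \<in> carrier_vec (M - 1) \<and>
               (matAt (M - 1) - g 0 \<cdot>\<^sub>m matBt (M - 1)) *\<^sub>v X =
                 (matAt (M - 1) + g 1 \<cdot>\<^sub>m matBt (M - 1)) *\<^sub>v U k
                 + vec (M - 1) (\<lambda>i. \<Sum>l = 2..k + 1. (g l \<cdot>\<^sub>v (matBt (M - 1) *\<^sub>v U (k + 1 - l))) $ i)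
                 + \<tau> \<cdot>\<^sub>v (matA (M - 1) *\<^sub>v F) + Ct))"
proof -
  let ?n = "M - 1"
  have g0: "g 0 \<ge> 0"
  proof -
    have "gw (1 - \<alpha>) 0 \<ge> 0" "gw (1 - \<beta>) 0 \<ge> 0"
      using assms(3-6) by (auto simp: gw_def varpi_def)
    moreover have "\<tau> powr \<alpha> * cA / h ^ 2 \<ge> 0" "\<tau> powr \<beta> * cB / h ^ 2 \<ge> 0"
      using assms(1,2) by auto
    ultimately show ?thesis unfolding g_def gab_def by (intro add_nonneg_nonneg mult_nonneg_nonneg)
  qed
  have d1: "det (matA ?n - g 0 \<cdot>\<^sub>m matB ?n) \<noteq> 0"
    unfolding matA_def matB_def toep_comb
    by (rule toep_det, simp, rule arith1[OF g0], assumption+, simp)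
  have d2: "det (matAt ?n - g 0 \<cdot>\<^sub>m matBt ?n) \<noteq> 0"
    unfolding matAt_def matBt_def toep_comb
    by (rule toep_det, simp, rule arith2[OF g0], assumption+, simp)
  have cA: "matA ?n \<in> carrier_mat ?n ?n" "matB ?n \<in> carrier_mat ?n ?n"
    "matAt ?n \<in> carrier_mat ?n ?n" "matBt ?n \<in> carrier_mat ?n ?n"
    by (simp_all add: matA_def matB_def matAt_def matBt_def)
  have m1: "matA ?n - g 0 \<cdot>\<^sub>m matB ?n \<in> carrier_mat ?n ?n"
    unfolding matA_def matB_def toep_comb by (rule toep_carrier)
  have m2: "matAt ?n - g 0 \<cdot>\<^sub>m matBt ?n \<in> carrier_mat ?n ?n"
    unfolding matAt_def matBt_def toep_comb by (rule toep_carrier)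
  show ?thesis
  proof (intro conjI d1 d2 allI impI)
    fix k :: nat and U :: "nat \<Rightarrow> real vec" and F C Ct :: "real vec"
    assume U: "\<forall>j\<le>k. U (j::nat) \<in> carrier_vec ?n" and F: "F \<in> carrier_vec ?n"
      and C: "C \<in> carrier_vec ?n" and Ct: "Ct \<in> carrier_vec ?n"
    show "\<exists>!X. X \<in> carrier_vec ?n \<and>
               (matA ?n - g 0 \<cdot>\<^sub>m matB ?n) *\<^sub>v X =
                 (matA ?n + g 1 \<cdot>\<^sub>m matB ?n) *\<^sub>v U k
                 + vec ?n (\<lambda>i. \<Sum>l = 2..k + 1. (g l \<cdot>\<^sub>v (matB ?n *\<^sub>v U (k + 1 - l))) $ i)
                 + \<tau> \<cdot>\<^sub>v (matA ?n *\<^sub>v F) + C"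
      by (rule unique_solve[OF m1 d1 add_carr_right[OF C]])
    show "\<exists>!X. X \<in> carrier_vec ?n \<and>
               (matAt ?n - g 0 \<cdot>\<^sub>m matBt ?n) *\<^sub>v X =
                 (matAt ?n + g 1 \<cdot>\<^sub>m matBt ?n) *\<^sub>v U k
                 + vec ?n (\<lambda>i. \<Sum>l = 2..k + 1. (g l \<cdot>\<^sub>v (matBt ?n *\<^sub>v U (k + 1 - l))) $ i)
                 + \<tau> \<cdot>\<^sub>v (matA ?n *\<^sub>v F) + Ct"
      by (rule unique_solve[OF m2 d2 add_carr_right[OF Ct]])
  qed
qed

end
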